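(* Let $p=p(n)\in[0,1]$ and let $j=j(n)$, $k=k(n)$ be positive integer-valued functions of $n$. If $$\binom{n}{j}\binom{n}{k}\,p^{jk}\to 0\quad(n\to\infty),$$ then almost always $\|\mathcal{N}[G(n,p)]\|$ strong deformation retracts onto a subspace that is the geometric realization of a simplicial complex of dimension at most $j+k-3$.
   Context: For a graph $G$, the neighborhood complex $\mathcal{N}[G]$ is the simplicial complex on vertex set $V(G)$ whose faces are all subsets of $V(G)$ having a common neighbor. $\|\Delta\|$ denotes the geometric realization of a simplicial complex $\Delta$. $G(n,p)$ is the Erdős–Rényi random graph on vertex set $[n]$ with each possible edge present independently with probability $p$. A property holds almost always (a.a.) if its probability tends to $1$ as $n\to\infty$. *)

theory Defs
  imports "HOL-Analysis.Analysis"
begin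

definition pairs :: "nat \<Rightarrow> nat set set" where
  "pairs n = {e. \<exists>u v. u < n \<and> v < n \<and> u \<noteq> v \<and> e = {u, v}}"

text \<open>Probability that G(n,p) (edge set E \<subseteq> pairs n, each edge independently
  with probability p) has property P.\<close>
definition Gnp_prob :: "nat \<Rightarrow> real \<Rightarrow> (nat set set \<Rightarrow> bool) \<Rightarrow> real" where
  "Gnp_prob n p P = (\<Sum>E\<in>Pow (pairs n).
      if P E then p ^ card E * (1 - p) ^ (card (pairs n) - card E) else 0)"

definition almost_always :: "(nat \<Rightarrow> real) \<Rightarrow> (nat \<Rightarrow> nat set set \<Rightarrow> bool) \<Rightarrow> bool" where
  "almost_always p P \<longleftrightarrow> (\<lambda>n. Gnp_prob n (p n) (P n)) \<longlonglongrightarrow> 1"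

definition nbhd_complex :: "nat \<Rightarrow> nat set set \<Rightarrow> nat set set" where
  "nbhd_complex n E = {\<sigma>. \<sigma> \<subseteq> {0..<n} \<and> (\<exists>v<n. \<forall>u\<in>\<sigma>. {u, v} \<in> E)}"

definition simplicial_complex :: "nat set set \<Rightarrow> bool" where
  "simplicial_complex K \<longleftrightarrow> finite K \<and> (\<forall>\<sigma>\<in>K. finite \<sigma>) \<and> (\<forall>\<sigma>\<in>K. \<forall>\<tau>. \<tau> \<subseteq> \<sigma> \<longrightarrow> \<tau> \<in> K)"

definition realization_set :: "nat set set \<Rightarrow> (nat \<Rightarrow> real) set" where
  "realization_set K = {f. (\<forall>i. 0 \<le> f i) \<and> {i. f i \<noteq> 0} \<in> K \<and> sum f {i. f i \<noteq> 0} = 1}"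

definition realization :: "nat set set \<Rightarrow> (nat \<Rightarrow> real) topology" where
  "realization K = subtopology (powertop_real UNIV) (realization_set K)"

definition strong_deformation_retract :: "'a topology \<Rightarrow> 'a set \<Rightarrow> bool" where
  "strong_deformation_retract X A \<longleftrightarrow> A \<subseteq> topspace X \<and>
     (\<exists>r. continuous_map X X r \<and> r ` topspace X \<subseteq> A \<and> (\<forall>a\<in>A. r a = a) \<and>
          homotopic_with (\<lambda>h. \<forall>a\<in>A. h a = a) X X id r)"

end

theory Submission
  imports Defs "HOL-Library.Nat_Bijection"
begin



definition supp :: "(nat \<Rightarrow> real) \<Rightarrow> nat set" where
  "supp f = {i. f i \<noteq> 0}"

locale gr =
  fixes n :: nat and E :: "nat set set"
  assumes E: "E \<subseteq> pairs n"
begin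

definition nb :: "nat set \<Rightarrow> nat set" where
  "nb S = {v. v < n \<and> (\<forall>w\<in>S. {w, v} \<in> E)}"

definition cl :: "nat set \<Rightarrow> nat set" where
  "cl S = nb (nb S)"

lemma nb_sub: "nb S \<subseteq> {..<n}" by (auto simp: nb_def)

lemma cl_sub: "cl S \<subseteq> {..<n}" by (auto simp: cl_def nb_def)

lemma nb_anti: "S \<subseteq> T \<Longrightarrow> nb T \<subseteq> nb S" by (auto simp: nb_def)

lemma cl_mono: "S \<subseteq> T \<Longrightarrow> cl S \<subseteq> cl T" by (simp add: cl_def nb_anti)

lemma sub_cl: "S \<subseteq> {..<n} \<Longrightarrow> S \<subseteq> cl S"
  by (auto simp: cl_def nb_def insert_commute)

lemma nb_cl: "S \<subseteq> {..<n} \<Longrightarrow> nb (cl S) = nb S"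
proof
  assume S: "S \<subseteq> {..<n}"
  show "nb (cl S) \<subseteq> nb S" using nb_anti[OF sub_cl[OF S]] .
  show "nb S \<subseteq> nb (cl S)" using sub_cl[OF nb_sub[of S]] by (simp add: cl_def)
qed

lemma cl_cl: "S \<subseteq> {..<n} \<Longrightarrow> cl (cl S) = cl S"
  by (simp add: cl_def nb_cl[unfolded cl_def])

lemma nb_disj: "S \<inter> nb S = {}"
proof -
  { fix u assume "u \<in> S" "u \<in> nb S"
    then have "{u} \<in> E" by (auto simp: nb_def)
    then have False using E by (auto simp: pairs_def doubleton_eq_iff) }
  then show ?thesis by blast
qed

lemma face_iff: "\<sigma> \<in> nbhd_complex n E \<longleftrightarrow> \<sigma> \<subseteq> {..<n} \<and> nb \<sigma> \<noteq> {}"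
  by (auto simp: nbhd_complex_def nb_def)

lemma face_down: "\<sigma> \<in> nbhd_complex n E \<Longrightarrow> \<tau> \<subseteq> \<sigma> \<Longrightarrow> \<tau> \<in> nbhd_complex n E"
  by (auto simp: nbhd_complex_def)

lemma face_cl: "\<sigma> \<in> nbhd_complex n E \<Longrightarrow> cl \<sigma> \<in> nbhd_complex n E"
  using face_iff nb_cl cl_sub by auto

lemma real_iff: "f \<in> realization_set (nbhd_complex n E) \<longleftrightarrow>
   (\<forall>i. 0 \<le> f i) \<and> supp f \<in> nbhd_complex n E \<and> sum f {..<n} = 1"
proof -
  have "sum f {i. f i \<noteq> 0} = sum f {..<n}" if "supp f \<in> nbhd_complex n E"
    using that by (intro sum.mono_neutral_left) (auto simp: face_iff supp_def)
  then show ?thesis unfolding realization_set_def supp_def by auto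
qed

lemma real_zero: "f \<in> realization_set (nbhd_complex n E) \<Longrightarrow> i \<ge> n \<Longrightarrow> f i = 0"
  unfolding real_iff face_iff supp_def by auto

end



context gr
begin

definition fam :: "nat \<Rightarrow> nat set set" where
  "fam u = {S. S \<subseteq> {..<n} \<and> S \<noteq> {} \<and> u \<in> cl S}"

definition gfun :: "(nat \<Rightarrow> real) \<Rightarrow> nat \<Rightarrow> real" where
  "gfun f u = Max (insert 0 ((\<lambda>S. Min (f ` S)) ` fam u))"

definition cm :: "(nat \<Rightarrow> real) \<Rightarrow> bool" where
  "cm f \<longleftrightarrow> (\<forall>S u. S \<subseteq> {..<n} \<longrightarrow> S \<noteq> {} \<longrightarrow> u \<in> cl S \<longrightarrow> (\<exists>w\<in>S. f w \<le> f u))"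

abbreviation "R \<equiv> realization_set (nbhd_complex n E)"

definition Aset :: "(nat \<Rightarrow> real) set" where
  "Aset = {f \<in> R. cm f}"

definition rr :: "(nat \<Rightarrow> real) \<Rightarrow> nat \<Rightarrow> real" where
  "rr f = (\<lambda>u. gfun f u / sum (gfun f) {..<n})"

lemma fam_fin: "finite (fam u)"
  by (rule finite_subset[of _ "Pow {..<n}"]) (auto simp: fam_def)

lemma fam_S: "S \<in> fam u \<Longrightarrow> finite S \<and> S \<noteq> {} \<and> S \<subseteq> {..<n} \<and> u \<in> cl S"
  by (auto simp: fam_def intro: finite_subset)

lemma g_nonneg: "0 \<le> gfun f u"
  unfolding gfun_def using fam_fin by (intro Max_ge) auto

lemma g_ge_S: "S \<in> fam u \<Longrightarrow> Min (f ` S) \<le> gfun f u"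
  unfolding gfun_def using fam_fin by (intro Max_ge) auto

lemma g_ge: "u < n \<Longrightarrow> f u \<le> gfun f u"
proof -
  assume u: "u < n"
  have "{u} \<in> fam u" using sub_cl[of "{u}"] u by (auto simp: fam_def)
  from g_ge_S[OF this, of f] show ?thesis by simp
qed

lemma g_zero: "n \<le> u \<Longrightarrow> gfun f u = 0"
proof -
  assume "n \<le> u"
  then have "fam u = {}" using cl_sub by (force simp: fam_def)
  then show ?thesis by (simp add: gfun_def)
qed

lemma g_le: "0 \<le> c \<Longrightarrow> (\<And>S. S \<in> fam u \<Longrightarrow> Min (f ` S) \<le> c) \<Longrightarrow> gfun f u \<le> c"
  unfolding gfun_def using fam_fin by (subst Max_le_iff) auto

lemma g_pos: "0 < gfun f u \<Longrightarrow> \<exists>S\<in>fam u. gfun f u = Min (f ` S)"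
proof -
  assume p: "0 < gfun f u"
  have "gfun f u \<in> insert 0 ((\<lambda>S. Min (f ` S)) ` fam u)"
    unfolding gfun_def using fam_fin by (intro Max_in) auto
  with p show ?thesis by auto
qed

lemma g_fix:
  assumes nn: "\<And>i. 0 \<le> f i" and z: "\<And>i. n \<le> i \<Longrightarrow> f i = 0" and c: "cm f"
  shows "gfun f = f"
proof
  fix u
  show "gfun f u = f u"
  proof (cases "u < n")
    case True
    have "gfun f u \<le> f u"
    proof (rule g_le[OF nn])
      fix S assume "S \<in> fam u"
      then have S: "finite S" "S \<noteq> {}" "S \<subseteq> {..<n}" "u \<in> cl S" using fam_S by auto
      then obtain w where w: "w \<in> S" "f w \<le> f u" using c unfolding cm_def by blast
      have "Min (f ` S) \<le> f w" using S w by (intro Min_le) auto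
      then show "Min (f ` S) \<le> f u" using w by linarith
    qed
    then show ?thesis using g_ge[OF True, of f] by linarith
  next
    case False
    then show ?thesis using g_zero z by auto
  qed
qed

lemma g_supp:
  assumes nn: "\<And>i. 0 \<le> f i" and s: "supp f \<subseteq> {..<n}"
  shows "supp (gfun f) \<subseteq> cl (supp f)"
proof
  fix u assume "u \<in> supp (gfun f)"
  then have "0 < gfun f u" using g_nonneg[of f u] by (auto simp: supp_def)
  then obtain S where S: "S \<in> fam u" "gfun f u = Min (f ` S)" using g_pos by blast
  have fS: "finite S" "S \<noteq> {}" "u \<in> cl S" using fam_S[OF S(1)] by auto
  have "S \<subseteq> supp f"
  proof
    fix w assume w: "w \<in> S"
    have "Min (f ` S) \<le> f w" using fS w by (intro Min_le) auto
    then show "w \<in> supp f" using S \<open>0 < gfun f u\<close> by (auto simp: supp_def)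
  qed
  then show "u \<in> cl (supp f)" using cl_mono fS by blast
qed

lemma g_cm: "cm (gfun f)"
  unfolding cm_def
proof (intro allI impI)
  fix S u assume S: "S \<subseteq> {..<n}" "S \<noteq> {}" "u \<in> cl S"
  show "\<exists>w\<in>S. gfun f w \<le> gfun f u"
  proof (rule ccontr)
    assume "\<not> ?thesis"
    then have gt: "\<And>w. w \<in> S \<Longrightarrow> gfun f u < gfun f w" by auto
    have "\<forall>w\<in>S. \<exists>T\<in>fam w. gfun f w = Min (f ` T)"
      using gt g_nonneg[of f u] by (intro ballI g_pos) (meson le_less_trans)
    then obtain T where T: "\<And>w. w \<in> S \<Longrightarrow> T w \<in> fam w \<and> gfun f w = Min (f ` T w)"
      by metis
    define U where "U = (\<Union>w\<in>S. T w)"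
    have finS: "finite S" using S(1) finite_subset by blast
    have U: "U \<subseteq> {..<n}" "U \<noteq> {}" "finite U"
    proof -
      show "U \<subseteq> {..<n}" unfolding U_def using T fam_S by blast
      show "U \<noteq> {}" unfolding U_def using T fam_S S(2) by fastforce
      show "finite U" unfolding U_def using T fam_S finS by blast
    qed
    have "S \<subseteq> cl U"
    proof
      fix w assume w: "w \<in> S"
      then have "w \<in> cl (T w)" using T fam_S by blast
      moreover have "cl (T w) \<subseteq> cl U" using w by (intro cl_mono) (auto simp: U_def)
      ultimately show "w \<in> cl U" by blast
    qed
    then have "cl S \<subseteq> cl U" using cl_cl[OF U(1)] cl_mono by metis
    then have "U \<in> fam u" using U S by (auto simp: fam_def)
    then have le: "Min (f ` U) \<le> gfun f u" by (rule g_ge_S)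
    obtain t where t: "t \<in> U" "f t = Min (f ` U)"
    proof -
      have "Min (f ` U) \<in> f ` U" using U by (intro Min_in) auto
      then show ?thesis using that by auto
    qed
    then obtain w where w: "w \<in> S" "t \<in> T w" by (auto simp: U_def)
    have "Min (f ` T w) \<le> f t" using T[OF w(1)] fam_S w(2) by (intro Min_le) auto
    then have "gfun f w \<le> f t" using T[OF w(1)] by simp
    then show False using gt[OF w(1)] t le by linarith
  qed
qed

lemma cm_scale: "cm f \<Longrightarrow> 0 < c \<Longrightarrow> cm (\<lambda>u. f u / c)"
  unfolding cm_def by (meson divide_right_mono less_imp_le)

lemma sum_g_ge: "f \<in> R \<Longrightarrow> 1 \<le> sum (gfun f) {..<n}"
proof -
  assume f: "f \<in> R"
  have "sum f {..<n} \<le> sum (gfun f) {..<n}" by (intro sum_mono g_ge) auto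
  then show ?thesis using f by (simp add: real_iff)
qed

lemma rr_in: assumes f: "f \<in> R" shows "rr f \<in> Aset"
proof -
  define s where "s = sum (gfun f) {..<n}"
  have s: "1 \<le> s" using sum_g_ge[OF f] by (simp add: s_def)
  have fprops: "\<And>i. 0 \<le> f i" "supp f \<in> nbhd_complex n E" using f by (auto simp: real_iff)
  have sf: "supp f \<subseteq> {..<n}" using fprops(2) face_iff by auto
  have "supp (rr f) = supp (gfun f)" using s by (auto simp: rr_def supp_def s_def)
  also have "\<dots> \<subseteq> cl (supp f)" by (rule g_supp[OF fprops(1) sf])
  finally have "supp (rr f) \<in> nbhd_complex n E"
    using face_down[OF face_cl[OF fprops(2)]] by blast
  moreover have "\<forall>i. 0 \<le> rr f i" using s g_nonneg by (auto simp: rr_def s_def)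
  moreover have "sum (rr f) {..<n} = 1" using s
    by (simp add: rr_def sum_divide_distrib[symmetric] s_def)
  moreover have "cm (rr f)" unfolding rr_def using cm_scale[OF g_cm, of s f] s
    by (simp add: s_def)
  ultimately show ?thesis by (simp add: Aset_def real_iff)
qed

lemma rr_fix: assumes f: "f \<in> Aset" shows "rr f = f"
proof -
  have fR: "f \<in> R" and c: "cm f" using f by (auto simp: Aset_def)
  have g: "gfun f = f" using fR c real_zero by (intro g_fix) (auto simp: real_iff)
  have "sum f {..<n} = 1" using fR by (simp add: real_iff)
  then show ?thesis by (simp add: rr_def g)
qed

end



lemma cont_Min:
  assumes "finite S" "S \<noteq> {}" "\<And>i. i \<in> S \<Longrightarrow> continuous_map X euclideanreal (h i)"
  shows "continuous_map X euclideanreal (\<lambda>x. Min ((\<lambda>i. h i x) ` S))"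
  using assms
proof (induction S rule: finite_ne_induct)
  case (singleton x)
  then show ?case by simp
next
  case (insert x F)
  then show ?case by (simp add: continuous_map_real_min)
qed

lemma cont_Max0:
  assumes "finite F" "\<And>i. i \<in> F \<Longrightarrow> continuous_map X euclideanreal (h i)"
  shows "continuous_map X euclideanreal (\<lambda>x. Max (insert 0 ((\<lambda>i. h i x) ` F)))"
  using assms
proof (induction F rule: finite_induct)
  case empty
  then show ?case by simp
next
  case (insert a F)
  have eq: "\<And>x. Max (insert 0 ((\<lambda>i. h i x) ` insert a F)) = max (h a x) (Max (insert 0 ((\<lambda>i. h i x) ` F)))"
  proof -
    fix x
    have "insert 0 ((\<lambda>i. h i x) ` insert a F) = insert (h a x) (insert 0 ((\<lambda>i. h i x) ` F))" by auto
    then show "?thesis x" using insert(1) by simp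
  qed
  show ?case unfolding eq using insert by (intro continuous_map_real_max) auto
qed


context gr
begin

abbreviation "Xr \<equiv> realization (nbhd_complex n E)"

lemma top_Xr: "topspace Xr = R"
  by (simp add: realization_def)

lemma cont_coord: "continuous_map Xr euclideanreal (\<lambda>f. f i)"
  unfolding realization_def
  by (intro continuous_map_from_subtopology continuous_map_product_projection) auto

lemma cont_g: "continuous_map Xr euclideanreal (\<lambda>f. gfun f u)"
  unfolding gfun_def
proof (rule cont_Max0[OF fam_fin])
  fix S assume "S \<in> fam u"
  then have "finite S" "S \<noteq> {}" using fam_S by auto
  then show "continuous_map Xr euclideanreal (\<lambda>f. Min (f ` S))"
    using cont_Min[of S Xr "\<lambda>i f. f i"] cont_coord by auto
qed

lemma cont_rr_coord: "continuous_map Xr euclideanreal (\<lambda>f. rr f u)"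
  unfolding rr_def
proof (rule continuous_map_real_divide)
  show "continuous_map Xr euclideanreal (\<lambda>x. gfun x u)" by (rule cont_g)
  show "continuous_map Xr euclideanreal (\<lambda>x. sum (gfun x) {..<n})"
    by (intro continuous_map_sum cont_g) auto
  show "\<And>x. x \<in> topspace Xr \<Longrightarrow> sum (gfun x) {..<n} \<noteq> 0"
    using sum_g_ge top_Xr by fastforce
qed

lemma cont_rr: "continuous_map Xr Xr rr"
proof -
  have "continuous_map Xr (powertop_real UNIV) rr"
    using cont_rr_coord by (simp add: continuous_map_componentwise_UNIV)
  moreover have "rr ` topspace Xr \<subseteq> R" using rr_in top_Xr by (auto simp: Aset_def)
  ultimately show ?thesis unfolding realization_def
    by (intro continuous_map_into_subtopology) (auto simp: realization_def)
qed

definition H :: "real \<times> (nat \<Rightarrow> real) \<Rightarrow> nat \<Rightarrow> real" where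
  "H z = (\<lambda>u. (1 - fst z) * snd z u + fst z * rr (snd z) u)"

lemma H_in: assumes t: "0 \<le> t" "t \<le> 1" and f: "f \<in> R" shows "H (t, f) \<in> R"
proof -
  have rf: "rr f \<in> R" using rr_in[OF f] by (simp add: Aset_def)
  have nn: "\<And>i. 0 \<le> f i" "\<And>i. 0 \<le> rr f i" using f rf by (auto simp: real_iff)
  have sf: "supp f \<in> nbhd_complex n E" using f by (simp add: real_iff)
  have sfn: "supp f \<subseteq> {..<n}" using sf face_iff by auto
  have "supp (rr f) \<subseteq> cl (supp f)"
  proof -
    have "supp (rr f) \<subseteq> supp (gfun f)" by (auto simp: supp_def rr_def)
    then show ?thesis using g_supp[OF nn(1) sfn] by blast
  qed
  moreover have "supp (H (t, f)) \<subseteq> supp f \<union> supp (rr f)" by (auto simp: supp_def H_def)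
  ultimately have "supp (H (t, f)) \<subseteq> cl (supp f)" using sub_cl[OF sfn] by blast
  then have "supp (H (t, f)) \<in> nbhd_complex n E" using face_down[OF face_cl[OF sf]] by blast
  moreover have "\<forall>i. 0 \<le> H (t, f) i" using nn t by (auto simp: H_def)
  moreover have "sum (H (t, f)) {..<n} = 1"
  proof -
    have "sum (H (t, f)) {..<n} = (1 - t) * sum f {..<n} + t * sum (rr f) {..<n}"
      by (simp add: H_def sum.distrib sum_distrib_left)
    then show ?thesis using f rf by (simp add: real_iff)
  qed
  ultimately show ?thesis by (simp add: real_iff)
qed

lemma sdr: "strong_deformation_retract Xr Aset"
  unfolding strong_deformation_retract_def
proof (intro conjI exI)
  show "Aset \<subseteq> topspace Xr" by (auto simp: Aset_def top_Xr)
  show "continuous_map Xr Xr rr" by (rule cont_rr)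
  show "rr ` topspace Xr \<subseteq> Aset" using rr_in top_Xr by auto
  show "\<forall>a\<in>Aset. rr a = a" using rr_fix by auto
  show "homotopic_with (\<lambda>h. \<forall>a\<in>Aset. h a = a) Xr Xr id rr"
    unfolding homotopic_with_def
  proof (intro exI conjI allI ballI)
    let ?P = "prod_topology (top_of_set {0..1::real}) Xr"
    have cfst: "continuous_map ?P euclideanreal fst"
      using continuous_map_compose[OF continuous_map_fst continuous_map_from_subtopology[OF continuous_map_id]]
      by (simp add: o_def)
    have csnd: "continuous_map ?P euclideanreal (\<lambda>z. snd z u)" for u
      using continuous_map_compose[OF continuous_map_snd cont_coord] by (simp add: o_def)
    have crr: "continuous_map ?P euclideanreal (\<lambda>z. rr (snd z) u)" for u
      using continuous_map_compose[OF continuous_map_snd cont_rr_coord] by (simp add: o_def)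
    have "continuous_map ?P (powertop_real UNIV) H"
      unfolding continuous_map_componentwise_UNIV H_def
      using cfst csnd crr by (intro allI continuous_intros) auto
    moreover have "H ` topspace ?P \<subseteq> R"
      using H_in by (auto simp: top_Xr)
    ultimately show "continuous_map ?P Xr H" unfolding realization_def
      by (intro continuous_map_into_subtopology) (auto simp: realization_def)
    show "H (0, x) = id x" for x by (simp add: H_def)
    show "H (1, x) = rr x" for x by (simp add: H_def)
    show "H (t, a) = a" if "a \<in> Aset" for t a using rr_fix[OF that] by (simp add: H_def algebra_simps)
  qed
qed

end



lemma chain_max:
  assumes "finite D" "D \<noteq> {}" "\<forall>a\<in>D. \<forall>b\<in>D. F a \<subseteq> F b \<or> F b \<subseteq> F a"
  shows "\<exists>c\<in>D. \<forall>c'\<in>D. F c' \<subseteq> F c"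
  using assms
proof (induction D rule: finite_ne_induct)
  case (singleton x)
  then show ?case by auto
next
  case (insert x D)
  then obtain m where m: "m \<in> D" "\<forall>c'\<in>D. F c' \<subseteq> F m" by auto
  have "F x \<subseteq> F m \<or> F m \<subseteq> F x" using insert(5) m(1) by auto
  then show ?case using m by auto
qed

context gr
begin

abbreviation "dec \<equiv> set_decode"

definition Kc :: "nat set" where
  "Kc = {c. dec c \<noteq> {} \<and> dec c \<subseteq> {..<n} \<and> cl (dec c) = dec c \<and> nb (dec c) \<noteq> {}}"

definition chn :: "nat set \<Rightarrow> bool" where
  "chn D \<longleftrightarrow> D \<subseteq> Kc \<and> (\<forall>a\<in>D. \<forall>b\<in>D. dec a \<subseteq> dec b \<or> dec b \<subseteq> dec a)"

definition Lc :: "nat set set" where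
  "Lc = {D. chn D}"

definition bary :: "nat \<Rightarrow> nat \<Rightarrow> real" where
  "bary c u = (if u \<in> dec c then 1 / real (card (dec c)) else 0)"

definition Phi :: "(nat \<Rightarrow> real) \<Rightarrow> nat \<Rightarrow> real" where
  "Phi w = (\<lambda>u. \<Sum>c\<in>Kc. w c * bary c u)"

lemma Kc_fin: "finite Kc"
proof (rule finite_subset)
  show "Kc \<subseteq> set_encode ` Pow {..<n}"
  proof
    fix c assume "c \<in> Kc"
    then have "dec c \<in> Pow {..<n}" by (auto simp: Kc_def)
    then show "c \<in> set_encode ` Pow {..<n}" by (metis image_eqI set_decode_inverse)
  qed
qed auto

lemma Kc_D: "c \<in> Kc \<Longrightarrow> dec c \<noteq> {} \<and> dec c \<subseteq> {..<n} \<and> cl (dec c) = dec c \<and> nb (dec c) \<noteq> {}"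
  by (simp add: Kc_def)

lemma chn_sub: "chn D \<Longrightarrow> D' \<subseteq> D \<Longrightarrow> chn D'"
  unfolding chn_def by blast

lemma chn_fin: "chn D \<Longrightarrow> finite D"
  unfolding chn_def using Kc_fin finite_subset by blast

lemma sc_Lc: "simplicial_complex Lc"
  unfolding simplicial_complex_def
proof (intro conjI ballI allI impI)
  show "finite Lc" by (rule finite_subset[of _ "Pow Kc"]) (auto simp: Lc_def chn_def Kc_fin)
  show "finite \<sigma>" if "\<sigma> \<in> Lc" for \<sigma> using that chn_fin by (auto simp: Lc_def)
  show "\<tau> \<in> Lc" if "\<sigma> \<in> Lc" "\<tau> \<subseteq> \<sigma>" for \<sigma> \<tau> using that chn_sub by (auto simp: Lc_def)
qed

lemma bary_nonneg: "0 \<le> bary c u" by (simp add: bary_def)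

lemma bary_zero: "c \<in> Kc \<Longrightarrow> n \<le> u \<Longrightarrow> bary c u = 0"
  using Kc_D by (force simp: bary_def)

lemma bary_sum: "c \<in> Kc \<Longrightarrow> (\<Sum>u<n. bary c u) = 1"
proof -
  assume c: "c \<in> Kc"
  have "(\<Sum>u<n. bary c u) = (\<Sum>u\<in>{..<n} \<inter> {u. u \<in> dec c}. 1 / real (card (dec c)))"
    by (subst sum.inter_restrict) (auto simp: bary_def)
  also have "{..<n} \<inter> {u. u \<in> dec c} = dec c" using Kc_D[OF c] by auto
  finally show ?thesis using Kc_D[OF c] by simp
qed

lemma Phi_sum: "sum (Phi w) {..<n} = sum w Kc"
proof -
  have "sum (Phi w) {..<n} = (\<Sum>c\<in>Kc. w c * (\<Sum>u<n. bary c u))"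
    unfolding Phi_def by (subst sum.swap) (simp add: sum_distrib_left)
  also have "\<dots> = sum w Kc" by (intro sum.cong) (auto simp: bary_sum)
  finally show ?thesis .
qed

lemma Phi_nonneg: "(\<And>c. 0 \<le> w c) \<Longrightarrow> 0 \<le> Phi w u"
  unfolding Phi_def by (intro sum_nonneg mult_nonneg_nonneg bary_nonneg) auto

lemma Phi_zero: "n \<le> u \<Longrightarrow> Phi w u = 0"
  unfolding Phi_def by (simp add: bary_zero)

lemma Phi_add: "Phi (\<lambda>c. w1 c + w2 c) u = Phi w1 u + Phi w2 u"
  unfolding Phi_def by (simp add: distrib_right sum.distrib)

lemma Phi_single: "c \<in> Kc \<Longrightarrow> Phi (\<lambda>c'. if c' = c then x else 0) u = x * bary c u"
proof -
  assume c: "c \<in> Kc"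
  have "Phi (\<lambda>c'. if c' = c then x else 0) u = (\<Sum>c'\<in>Kc. if c' = c then x * bary c' u else 0)"
    unfolding Phi_def by (intro sum.cong) auto
  also have "\<dots> = x * bary c u" using c Kc_fin by simp
  finally show ?thesis .
qed

lemma Phi_supp_sum: "supp w \<subseteq> Kc \<Longrightarrow> Phi w u = (\<Sum>c\<in>supp w. w c * bary c u)"
  unfolding Phi_def using Kc_fin by (intro sum.mono_neutral_right) (auto simp: supp_def)

lemma Phi_ge: "(\<And>c. 0 \<le> w c) \<Longrightarrow> c \<in> Kc \<Longrightarrow> w c * bary c u \<le> Phi w u"
  unfolding Phi_def using Kc_fin
  by (intro member_le_sum mult_nonneg_nonneg bary_nonneg) auto

lemma supp_Phi:
  assumes nn: "\<And>c. 0 \<le> w c" and s: "supp w \<subseteq> Kc"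
  shows "supp (Phi w) = (\<Union>c\<in>supp w. dec c)"
proof
  show "supp (Phi w) \<subseteq> (\<Union>c\<in>supp w. dec c)"
  proof
    fix u assume "u \<in> supp (Phi w)"
    then have "(\<Sum>c\<in>supp w. w c * bary c u) \<noteq> 0" using Phi_supp_sum[OF s] by (simp add: supp_def)
    then obtain c where "c \<in> supp w" "w c * bary c u \<noteq> 0" by (meson sum.neutral)
    then show "u \<in> (\<Union>c\<in>supp w. dec c)" by (auto simp: bary_def split: if_splits)
  qed
  show "(\<Union>c\<in>supp w. dec c) \<subseteq> supp (Phi w)"
  proof
    fix u assume "u \<in> (\<Union>c\<in>supp w. dec c)"
    then obtain c where c: "c \<in> supp w" "u \<in> dec c" by auto
    have "0 < w c" using c nn[of c] by (auto simp: supp_def)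
    moreover have "0 < bary c u" using c Kc_D[of c] s by (auto simp: bary_def card_gt_0_iff)
    ultimately have "0 < w c * bary c u" by simp
    also have "\<dots> \<le> Phi w u" using Phi_ge[of w c u] nn c s by auto
    finally show "u \<in> supp (Phi w)" by (simp add: supp_def)
  qed
qed

lemma Phi_cm:
  assumes nn: "\<And>c. 0 \<le> w c" and ch: "chn (supp w)"
  shows "cm (Phi w)"
  unfolding cm_def
proof (intro allI impI)
  fix S u assume S: "S \<subseteq> {..<n}" "S \<noteq> {}" "u \<in> cl S"
  have sK: "supp w \<subseteq> Kc" using ch by (simp add: chn_def)
  have "\<exists>x\<in>S. \<forall>c\<in>supp w. x \<in> dec c \<longrightarrow> u \<in> dec c"
  proof (rule ccontr)
    assume "\<not> ?thesis"
    then have "\<forall>x\<in>S. \<exists>c\<in>supp w. x \<in> dec c \<and> u \<notin> dec c" by auto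
    then obtain cf where cf: "\<And>x. x \<in> S \<Longrightarrow> cf x \<in> supp w \<and> x \<in> dec (cf x) \<and> u \<notin> dec (cf x)"
      by metis
    have finS: "finite S" using S(1) finite_subset by blast
    have "cf ` S \<subseteq> supp w" using cf by auto
    then have "chn (cf ` S)" using chn_sub[OF ch] by blast
    then obtain m where m: "m \<in> cf ` S" "\<forall>c'\<in>cf ` S. dec c' \<subseteq> dec m"
      using chain_max[of "cf ` S" dec] finS S(2) by (auto simp: chn_def)
    have mK: "m \<in> Kc" using m(1) cf sK by auto
    have "S \<subseteq> dec m" using cf m(2) by blast
    then have "cl S \<subseteq> dec m" using cl_mono Kc_D[OF mK] by metis
    moreover have "u \<notin> dec m" using m(1) cf by auto
    ultimately show False using S(3) by blast
  qed
  then obtain x where x: "x \<in> S" "\<forall>c\<in>supp w. x \<in> dec c \<longrightarrow> u \<in> dec c" by blast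
  have "Phi w x \<le> Phi w u"
    unfolding Phi_def
  proof (rule sum_mono)
    fix c assume "c \<in> Kc"
    show "w c * bary c x \<le> w c * bary c u"
    proof (cases "w c = 0")
      case False
      then have "c \<in> supp w" by (simp add: supp_def)
      then show ?thesis using x(2) nn[of c] by (auto simp: bary_def)
    qed simp
  qed
  then show "\<exists>x\<in>S. Phi w x \<le> Phi w u" using x(1) by blast
qed

lemma realL_iff: "t \<in> realization_set Lc \<longleftrightarrow> (\<forall>i. 0 \<le> t i) \<and> chn (supp t) \<and> sum t Kc = 1"
proof -
  have "sum t {i. t i \<noteq> 0} = sum t Kc" if "chn (supp t)"
    using that Kc_fin by (intro sum.mono_neutral_left) (auto simp: chn_def supp_def)
  then show ?thesis unfolding realization_set_def Lc_def supp_def by auto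
qed

lemma Phi_in: assumes t: "t \<in> realization_set Lc" shows "Phi t \<in> Aset"
proof -
  have nn: "\<And>c. 0 \<le> t c" and ch: "chn (supp t)" and s1: "sum t Kc = 1" using t by (auto simp: realL_iff)
  have sK: "supp t \<subseteq> Kc" using ch by (simp add: chn_def)
  have "supp t \<noteq> {}"
  proof
    assume "supp t = {}"
    then have "sum t Kc = 0" by (intro sum.neutral) (auto simp: supp_def)
    with s1 show False by simp
  qed
  then obtain m where m: "m \<in> supp t" "\<forall>c'\<in>supp t. dec c' \<subseteq> dec m"
    using chain_max[of "supp t" dec] chn_fin[OF ch] ch by (auto simp: chn_def)
  have "supp (Phi t) \<subseteq> dec m" using supp_Phi[OF nn sK] m(2) by auto
  moreover have "dec m \<in> nbhd_complex n E" using Kc_D[of m] m(1) sK by (auto simp: face_iff)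
  ultimately have "supp (Phi t) \<in> nbhd_complex n E" using face_down by blast
  moreover have "sum (Phi t) {..<n} = 1" using Phi_sum s1 by simp
  moreover have "\<forall>i. 0 \<le> Phi t i" using Phi_nonneg nn by auto
  ultimately show ?thesis using Phi_cm[OF nn ch] by (simp add: Aset_def real_iff)
qed

end



context gr
begin

lemma Phi_0: "Phi (\<lambda>_. 0) = (\<lambda>_. 0)"
  by (simp add: Phi_def fun_eq_iff)

lemma dec_inj: "dec a = dec b \<Longrightarrow> a = b"
  by (metis set_decode_inverse)

lemma surj_gen:
  "\<forall>a. card (supp a) = N \<longrightarrow> (\<forall>i. 0 \<le> a i) \<longrightarrow> supp a \<subseteq> {..<n} \<longrightarrow>
     (supp a = {} \<or> nb (supp a) \<noteq> {}) \<longrightarrow> cm a \<longrightarrow>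
     (\<exists>w. (\<forall>c. 0 \<le> w c) \<and> chn (supp w) \<and> (\<forall>c\<in>supp w. dec c \<subseteq> supp a) \<and> Phi w = a)"
proof (induction N rule: less_induct)
  case (less N)
  show ?case
  proof (intro allI impI)
    fix a assume cardN: "card (supp a) = N" and nn: "\<forall>i. 0 \<le> a i" and sn: "supp a \<subseteq> {..<n}"
      and nbY: "supp a = {} \<or> nb (supp a) \<noteq> {}" and cma: "cm a"
    define Y where "Y = supp a"
    have finY: "finite Y" using sn finite_subset Y_def by blast
    show "\<exists>w. (\<forall>c. 0 \<le> w c) \<and> chn (supp w) \<and> (\<forall>c\<in>supp w. dec c \<subseteq> supp a) \<and> Phi w = a"
    proof (cases "Y = {}")
      case True
      then have "a = (\<lambda>_. 0)" by (auto simp: Y_def supp_def fun_eq_iff)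
      then show ?thesis
        by (intro exI[of _ "\<lambda>_. 0"]) (auto simp: Phi_0 supp_def chn_def)
    next
      case False
      have nbY': "nb Y \<noteq> {}" using nbY False Y_def by auto
      have pos: "\<And>u. u \<in> Y \<Longrightarrow> 0 < a u" using nn by (force simp: Y_def supp_def less_le)
      have clY: "cl Y = Y"
      proof
        show "Y \<subseteq> cl Y" using sub_cl sn Y_def by auto
        show "cl Y \<subseteq> Y"
        proof
          fix u assume "u \<in> cl Y"
          then obtain x where "x \<in> Y" "a x \<le> a u" using cma False sn unfolding cm_def Y_def by blast
          then show "u \<in> Y" using pos[of x] by (auto simp: Y_def supp_def)
        qed
      qed
      define cY where "cY = set_encode Y"
      have dcY: "dec cY = Y" using finY by (simp add: cY_def)
      have cYK: "cY \<in> Kc" using dcY False sn clY nbY' by (auto simp: Kc_def Y_def)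
      define m where "m = Min (a ` Y)"
      have mY: "m \<in> a ` Y" using finY False by (simp add: m_def)
      have mpos: "0 < m" using mY pos by auto
      have mle: "\<And>u. u \<in> Y \<Longrightarrow> m \<le> a u" using finY by (simp add: m_def)
      define a' where "a' = (\<lambda>u. if u \<in> Y then a u - m else 0)"
      have nn': "\<forall>i. 0 \<le> a' i" using mle by (simp add: a'_def)
      have sa': "supp a' \<subseteq> Y" by (auto simp: a'_def supp_def)
      have psub: "supp a' \<subset> Y"
      proof -
        obtain y where "y \<in> Y" "a y = m" using mY by auto
        then have "y \<notin> supp a'" by (simp add: a'_def supp_def)
        then show ?thesis using sa' \<open>y \<in> Y\<close> by blast
      qed
      have cardlt: "card (supp a') < N" using psubset_card_mono[OF finY psub] cardN Y_def by simp
      have sn': "supp a' \<subseteq> {..<n}" using sa' sn Y_def by auto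
      have nb': "supp a' = {} \<or> nb (supp a') \<noteq> {}" using nb_anti[OF sa'] nbY' by blast
      have cm': "cm a'"
        unfolding cm_def
      proof (intro allI impI)
        fix S u assume S: "S \<subseteq> {..<n}" "S \<noteq> {}" "u \<in> cl S"
        show "\<exists>w\<in>S. a' w \<le> a' u"
        proof (cases "\<exists>x\<in>S. a' x = 0")
          case True
          then show ?thesis using nn' by metis
        next
          case False
          then have "S \<subseteq> Y" using sa' by (auto simp: supp_def)
          then have uY: "u \<in> Y" using S(3) cl_mono clY by blast
          obtain x where x: "x \<in> S" "a x \<le> a u" using cma S unfolding cm_def by blast
          then show ?thesis using \<open>S \<subseteq> Y\<close> uY by (intro bexI[of _ x]) (auto simp: a'_def)
        qed
      qed
      obtain w' where w': "\<forall>c. 0 \<le> w' c" "chn (supp w')" "\<forall>c\<in>supp w'. dec c \<subseteq> supp a'" "Phi w' = a'"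
        using less.IH[OF cardlt] cardN nn' sn' nb' cm' by blast
      define w where "w = (\<lambda>c. w' c + (if c = cY then m * real (card Y) else 0))"
      have "w' cY = 0"
      proof (rule ccontr)
        assume "w' cY \<noteq> 0"
        then have "Y \<subseteq> supp a'" using w'(3) dcY by (auto simp: supp_def)
        then show False using psub by blast
      qed
      have suppw: "supp w \<subseteq> insert cY (supp w')" by (auto simp: w_def supp_def)
      have chi: "chn (insert cY (supp w'))"
        using w'(2,3) cYK sa' dcY unfolding chn_def by blast
      have "Phi w = a"
      proof
        fix u
        have "Phi w u = Phi w' u + Phi (\<lambda>c. if c = cY then m * real (card Y) else 0) u"
          unfolding w_def by (rule Phi_add)
        also have "\<dots> = a' u + m * real (card Y) * bary cY u" using Phi_single[OF cYK] w'(4) by simp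
        also have "\<dots> = a u"
          using finY False by (auto simp: a'_def bary_def dcY Y_def supp_def)
        finally show "Phi w u = a u" .
      qed
      moreover have "\<forall>c. 0 \<le> w c" using w'(1) mpos by (simp add: w_def)
      moreover have "chn (supp w)" using chn_sub[OF chi suppw] .
      moreover have "\<forall>c\<in>supp w. dec c \<subseteq> supp a"
        using suppw w'(3) sa' dcY Y_def by blast
      ultimately show ?thesis by blast
    qed
  qed
qed

lemma Phi_surj: assumes a: "a \<in> Aset" shows "\<exists>t\<in>realization_set Lc. Phi t = a"
proof -
  have aR: "a \<in> R" and c: "cm a" using a by (auto simp: Aset_def)
  have nn: "\<forall>i. 0 \<le> a i" and sf: "supp a \<in> nbhd_complex n E" and s1: "sum a {..<n} = 1"
    using aR by (auto simp: real_iff)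
  obtain w where w: "\<forall>c. 0 \<le> w c" "chn (supp w)" "Phi w = a"
    using surj_gen[rule_format, OF refl, of a] nn sf c by (auto simp: face_iff)
  have "sum w Kc = 1" using Phi_sum[of w] w(3) s1 by simp
  then show ?thesis using w by (auto simp: realL_iff)
qed

lemma minval:
  assumes nn: "\<And>c. 0 \<le> w c" and ch: "chn (supp w)" and c: "c \<in> supp w"
    and top: "\<forall>c'\<in>supp w. dec c' \<subseteq> dec c"
  shows "\<exists>u\<in>dec c. Phi w u = w c * bary c u"
proof -
  have sK: "supp w \<subseteq> Kc" using ch by (simp add: chn_def)
  have fin: "finite (supp w)" using chn_fin[OF ch] .
  have cK: "c \<in> Kc" using c sK by auto
  define D where "D = supp w - {c}"
  have "\<exists>u\<in>dec c. \<forall>c'\<in>D. u \<notin> dec c'"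
  proof (cases "D = {}")
    case True
    then show ?thesis using Kc_D[OF cK] by auto
  next
    case False
    have chD: "chn D" using chn_sub[OF ch] by (auto simp: D_def)
    obtain m where m: "m \<in> D" "\<forall>c'\<in>D. dec c' \<subseteq> dec m"
      using chain_max[of D dec] chn_fin[OF chD] chD False by (auto simp: chn_def)
    have "dec m \<subseteq> dec c" "dec m \<noteq> dec c" using m(1) top dec_inj by (auto simp: D_def)
    then obtain u where "u \<in> dec c" "u \<notin> dec m" by blast
    then show ?thesis using m(2) by blast
  qed
  then obtain u where u: "u \<in> dec c" "\<forall>c'\<in>D. u \<notin> dec c'" by blast
  have "Phi w u = w c * bary c u + (\<Sum>c'\<in>D. w c' * bary c' u)"
    unfolding Phi_supp_sum[OF sK] D_def using fin c by (simp add: sum.remove)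
  also have "(\<Sum>c'\<in>D. w c' * bary c' u) = 0" using u(2) by (simp add: bary_def)
  finally show ?thesis using u(1) by auto
qed

lemma Phi_zero_imp:
  assumes nn: "\<And>c. 0 \<le> w c" and ch: "chn (supp w)" and z: "Phi w = (\<lambda>_. 0)"
  shows "w = (\<lambda>_. 0)"
proof
  fix c
  have s: "sum w Kc = 0" using Phi_sum[of w] z by simp
  show "w c = 0"
  proof (cases "c \<in> Kc")
    case True
    then show ?thesis using s sum_nonneg_eq_0_iff[OF Kc_fin] nn by blast
  next
    case False
    then show ?thesis using ch by (auto simp: chn_def supp_def)
  qed
qed

lemma inj_gen:
  "\<forall>w1 w2. card (supp w1) = N \<longrightarrow> (\<forall>c. 0 \<le> w1 c) \<longrightarrow> (\<forall>c. 0 \<le> w2 c) \<longrightarrow>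
     chn (supp w1) \<longrightarrow> chn (supp w2) \<longrightarrow> Phi w1 = Phi w2 \<longrightarrow> w1 = w2"
proof (induction N rule: less_induct)
  case (less N)
  show ?case
  proof (intro allI impI)
    fix w1 w2 assume cN: "card (supp w1) = N" and nn1: "\<forall>c. 0 \<le> w1 c" and nn2: "\<forall>c. 0 \<le> w2 c"
      and ch1: "chn (supp w1)" and ch2: "chn (supp w2)" and eq: "Phi w1 = Phi w2"
    have sK1: "supp w1 \<subseteq> Kc" and sK2: "supp w2 \<subseteq> Kc" using ch1 ch2 by (auto simp: chn_def)
    show "w1 = w2"
    proof (cases "supp w1 = {} \<or> supp w2 = {}")
      case True
      then show ?thesis
      proof
        assume e: "supp w1 = {}"
        then have "w1 = (\<lambda>_. 0)" by (auto simp: supp_def fun_eq_iff)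
        then have "Phi w2 = (\<lambda>_. 0)" using eq Phi_0 by simp
        then show ?thesis using Phi_zero_imp[of w2] nn2 ch2 \<open>w1 = _\<close> by simp
      next
        assume e: "supp w2 = {}"
        then have "w2 = (\<lambda>_. 0)" by (auto simp: supp_def fun_eq_iff)
        then have "Phi w1 = (\<lambda>_. 0)" using eq Phi_0 by simp
        then show ?thesis using Phi_zero_imp[of w1] nn1 ch1 \<open>w2 = _\<close> by simp
      qed
    next
      case False
      obtain m1 where m1: "m1 \<in> supp w1" "\<forall>c'\<in>supp w1. dec c' \<subseteq> dec m1"
        using chain_max[of "supp w1" dec] chn_fin[OF ch1] ch1 False by (auto simp: chn_def)
      obtain m2 where m2: "m2 \<in> supp w2" "\<forall>c'\<in>supp w2. dec c' \<subseteq> dec m2"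
        using chain_max[of "supp w2" dec] chn_fin[OF ch2] ch2 False by (auto simp: chn_def)
      have "supp (Phi w1) = dec m1" using supp_Phi[of w1] nn1 sK1 m1 by auto
      moreover have "supp (Phi w2) = dec m2" using supp_Phi[of w2] nn2 sK2 m2 by auto
      ultimately have "m1 = m2" using eq dec_inj by metis
      define c where "c = m1"
      have cK: "c \<in> Kc" using m1 sK1 by (auto simp: c_def)
      have bc: "\<And>u. u \<in> dec c \<Longrightarrow> bary c u = 1 / real (card (dec c))" by (simp add: bary_def)
      obtain u1 where u1: "u1 \<in> dec c" "Phi w1 u1 = w1 c * bary c u1"
        using minval[of w1 m1] nn1 ch1 m1 by (auto simp: c_def)
      obtain u2 where u2: "u2 \<in> dec c" "Phi w2 u2 = w2 c * bary c u2"
        using minval[of w2 m2] nn2 ch2 m2 \<open>m1 = m2\<close> by (auto simp: c_def)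
      have "w2 c * bary c u1 \<le> Phi w2 u1" using Phi_ge[of w2 c u1] nn2 cK by auto
      then have le1: "w2 c \<le> w1 c" using u1 eq bc[OF u1(1)] Kc_D[OF cK]
        by (auto simp: divide_le_cancel card_gt_0_iff)
      have "w1 c * bary c u2 \<le> Phi w1 u2" using Phi_ge[of w1 c u2] nn1 cK by auto
      then have le2: "w1 c \<le> w2 c" using u2 eq bc[OF u2(1)] Kc_D[OF cK]
        by (auto simp: divide_le_cancel card_gt_0_iff)
      have wc: "w1 c = w2 c" using le1 le2 by simp
      define v1 where "v1 = w1(c := 0)"
      define v2 where "v2 = w2(c := 0)"
      have dv1: "w1 = (\<lambda>c'. v1 c' + (if c' = c then w1 c else 0))" by (auto simp: v1_def)
      have dv2: "w2 = (\<lambda>c'. v2 c' + (if c' = c then w2 c else 0))" by (auto simp: v2_def)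
      have "Phi v1 = Phi v2"
      proof
        fix u
        have "Phi w1 u = Phi v1 u + w1 c * bary c u"
          by (subst dv1) (simp add: Phi_add Phi_single[OF cK])
        moreover have "Phi w2 u = Phi v2 u + w2 c * bary c u"
          by (subst dv2) (simp add: Phi_add Phi_single[OF cK])
        ultimately show "Phi v1 u = Phi v2 u" using eq wc by simp
      qed
      moreover have "supp v1 = supp w1 - {c}" "supp v2 = supp w2 - {c}"
        by (auto simp: v1_def v2_def supp_def)
      moreover have "card (supp w1 - {c}) < N"
        using cN m1 chn_fin[OF ch1] card_Diff1_less[of "supp w1" c] by (simp add: c_def)
      ultimately have "v1 = v2"
      proof -
        assume a: "Phi v1 = Phi v2" "supp v1 = supp w1 - {c}" "supp v2 = supp w2 - {c}"
          "card (supp w1 - {c}) < N"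
        have "chn (supp v1)" using chn_sub[OF ch1] a(2) by blast
        moreover have "chn (supp v2)" using chn_sub[OF ch2] a(3) by blast
        moreover have "\<forall>c. 0 \<le> v1 c" "\<forall>c. 0 \<le> v2 c" using nn1 nn2 by (auto simp: v1_def v2_def)
        ultimately show ?thesis using less.IH[OF a(4), rule_format, of v1 v2] a(1,2) by simp
      qed
      then show ?thesis using dv1 dv2 wc by metis
    qed
  qed
qed

lemma Phi_inj: "inj_on Phi (realization_set Lc)"
proof (rule inj_onI)
  fix x y assume "x \<in> realization_set Lc" "y \<in> realization_set Lc" "Phi x = Phi y"
  then show "x = y" using inj_gen[rule_format, OF refl, of x y] by (simp add: realL_iff)
qed

end



definition bad :: "nat \<Rightarrow> nat \<Rightarrow> nat \<Rightarrow> nat set set \<Rightarrow> bool" where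
  "bad n j k E \<longleftrightarrow> (\<exists>S T. S \<subseteq> {..<n} \<and> T \<subseteq> {..<n} \<and> card S = j \<and> card T = k \<and> S \<inter> T = {} \<and>
      (\<forall>s\<in>S. \<forall>t\<in>T. {s, t} \<in> E))"

context gr
begin

definition simpl :: "nat set \<Rightarrow> (nat \<Rightarrow> real) set" where
  "simpl D = (PiE UNIV (\<lambda>i. if i \<in> D then {0..1} else {0})) \<inter> {t. sum t D = 1}"

lemma realL_Union: "realization_set Lc = \<Union> (simpl ` Lc)"
proof (intro set_eqI iffI)
  fix t assume t: "t \<in> realization_set Lc"
  then have nn: "\<forall>i. 0 \<le> t i" and ch: "chn (supp t)" and s: "sum t Kc = 1" by (auto simp: realL_iff)
  have sK: "supp t \<subseteq> Kc" using ch by (simp add: chn_def)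
  have le1: "t i \<le> 1" for i
  proof (cases "i \<in> Kc")
    case True
    then show ?thesis using s member_le_sum[of i Kc t] Kc_fin nn by auto
  next
    case False
    then have "t i = 0" using sK unfolding supp_def by blast
    then show ?thesis by simp
  qed
  have "sum t (supp t) = sum t Kc" using sK Kc_fin by (intro sum.mono_neutral_left) (auto simp: supp_def)
  then have "t \<in> simpl (supp t)" using nn le1 s by (auto simp: simpl_def supp_def)
  moreover have "supp t \<in> Lc" using ch by (simp add: Lc_def)
  ultimately show "t \<in> \<Union> (simpl ` Lc)" by blast
next
  fix t assume "t \<in> \<Union> (simpl ` Lc)"
  then obtain D where D: "D \<in> Lc" "t \<in> simpl D" by blast
  have ch: "chn D" using D by (simp add: Lc_def)
  have DK: "D \<subseteq> Kc" using ch by (simp add: chn_def)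
  have tv: "\<And>i. t i \<in> (if i \<in> D then {0..1} else {0})" using D(2) by (auto simp: simpl_def PiE_iff)
  have nn: "\<forall>i. 0 \<le> t i" using tv by (metis atLeastAtMost_iff order_refl singletonD)
  have sD: "supp t \<subseteq> D"
  proof
    fix x assume "x \<in> supp t"
    then show "x \<in> D" using tv[of x] by (cases "x \<in> D") (auto simp: supp_def)
  qed
  have "sum t D = sum t Kc" using DK Kc_fin sD finite_subset[OF DK Kc_fin] by (intro sum.mono_neutral_left) (auto simp: supp_def)
  then have "sum t Kc = 1" using D(2) by (simp add: simpl_def)
  then show "t \<in> realization_set Lc" using nn chn_sub[OF ch sD] by (simp add: realL_iff)
qed

lemma compact_simpl: assumes fD: "finite D" shows "compactin (powertop_real UNIV) (simpl D)"
  unfolding simpl_def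
proof (rule compact_Int_closedin)
  show "compactin (powertop_real UNIV) (PiE UNIV (\<lambda>i. if i \<in> D then {0..1::real} else {0}))"
    by (subst compactin_PiE) auto
  have "continuous_map (powertop_real UNIV) euclideanreal (\<lambda>t. sum t D)"
    using fD by (intro continuous_map_sum continuous_map_product_projection) auto
  from closedin_continuous_map_preimage[OF this, of "{1}"]
  show "closedin (powertop_real UNIV) {t. sum t D = 1}" by simp
qed

lemma compact_L: "compact_space (realization Lc)"
  unfolding realization_def
proof (intro compact_space_subtopology)
  have "finite Lc" "\<And>D. D \<in> Lc \<Longrightarrow> finite D" using sc_Lc by (auto simp: simplicial_complex_def)
  then show "compactin (powertop_real UNIV) (realization_set Lc)"
    unfolding realL_Union by (auto intro!: compactin_Union compact_simpl)
qed

lemma homeo: "subtopology Xr Aset homeomorphic_space realization Lc"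
proof -
  have eqsub: "subtopology Xr Aset = subtopology (powertop_real UNIV) Aset"
    unfolding realization_def subtopology_subtopology by (metis Aset_def Int_absorb1 mem_Collect_eq subsetI)
  have "homeomorphic_map (realization Lc) (subtopology (powertop_real UNIV) Aset) Phi"
  proof (rule continuous_imp_homeomorphic_map)
    have "continuous_map (realization Lc) (powertop_real UNIV) Phi"
      unfolding continuous_map_componentwise_UNIV Phi_def realization_def
      by (intro allI continuous_map_sum continuous_map_real_mult continuous_map_const[THEN iffD2]
          continuous_map_from_subtopology continuous_map_product_projection) (auto simp: Kc_fin)
    moreover have "Phi ` topspace (realization Lc) \<subseteq> Aset"
      using Phi_in by (auto simp: realization_def)
    ultimately show "continuous_map (realization Lc) (subtopology (powertop_real UNIV) Aset) Phi"
      by (intro continuous_map_into_subtopology) auto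
    show "compact_space (realization Lc)" by (rule compact_L)
    show "Hausdorff_space (subtopology (powertop_real UNIV) Aset)"
      by (intro Hausdorff_space_subtopology) (simp add: Hausdorff_space_product_topology)
    show "Phi ` topspace (realization Lc) = topspace (subtopology (powertop_real UNIV) Aset)"
      using Phi_in Phi_surj by (auto simp: realization_def)
    show "inj_on Phi (topspace (realization Lc))"
      using Phi_inj by (simp add: realization_def)
  qed
  then have "realization Lc homeomorphic_space subtopology (powertop_real UNIV) Aset"
    by (rule homeomorphic_map_imp_homeomorphic_space)
  then show ?thesis using eqsub homeomorphic_space_sym by metis
qed

end



lemma inj_card_le:
  assumes "inj_on f A" "f ` A \<subseteq> {1..m}" shows "card A \<le> m"
proof -
  have "card A = card (f ` A)" using assms(1) by (simp add: card_image)
  also have "\<dots> \<le> card {1..m}" using assms(2) by (intro card_mono) auto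
  finally show ?thesis by simp
qed

context gr
begin

lemma dim:
  assumes nb0: "\<not> bad n j k E" and j: "0 < j" and k: "0 < k" and D: "D \<in> Lc"
  shows "card D + 2 \<le> j + k"
proof (rule ccontr)
  assume "\<not> ?thesis"
  then have big: "j + k \<le> card D + 1" by simp
  have ch: "chn D" using D by (simp add: Lc_def)
  have fD: "finite D" using chn_fin[OF ch] .
  have DK: "D \<subseteq> Kc" using ch by (simp add: chn_def)
  have cmp: "\<And>x x'. x \<in> D \<Longrightarrow> x' \<in> D \<Longrightarrow> dec x \<subseteq> dec x' \<or> dec x' \<subseteq> dec x"
    using ch by (simp add: chn_def)
  define below where "below y = {x\<in>D. dec x \<subseteq> dec y}" for y
  define above where "above y = {x\<in>D. dec y \<subseteq> dec x}" for y
  have finb: "finite (below y)" for y using fD by (simp add: below_def)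
  have fina: "finite (above y)" for y using fD by (simp add: above_def)
  have injb: "inj_on (\<lambda>y. card (below y)) D"
  proof (rule inj_onI)
    fix y y' assume yy: "y \<in> D" "y' \<in> D" "card (below y) = card (below y')"
    { fix a b assume ab: "a \<in> D" "b \<in> D" "dec a \<subseteq> dec b" "card (below a) = card (below b)"
      then have "below a \<subseteq> below b" by (auto simp: below_def)
      then have "below a = below b" using card_subset_eq[OF finb] ab(4) by metis
      then have "b \<in> below a" using ab by (auto simp: below_def)
      then have "a = b" using ab(3) dec_inj by (auto simp: below_def) }
    then show "y = y'" using cmp[OF yy(1,2)] yy by metis
  qed
  have imb: "(\<lambda>y. card (below y)) ` D \<subseteq> {1..card D}"
  proof
    fix z assume "z \<in> (\<lambda>y. card (below y)) ` D"
    then obtain y where y: "y \<in> D" "z = card (below y)" by auto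
    have "y \<in> below y" using y by (simp add: below_def)
    then have "1 \<le> card (below y)" using finb[of y] by (simp add: Suc_le_eq card_gt_0_iff) blast
    moreover have "card (below y) \<le> card D" using fD by (intro card_mono) (auto simp: below_def)
    ultimately show "z \<in> {1..card D}" using y by simp
  qed
  have "card ((\<lambda>y. card (below y)) ` D) = card {1..card D}"
    using injb by (simp add: card_image)
  then have "(\<lambda>y. card (below y)) ` D = {1..card D}" using card_subset_eq[OF _ imb] by simp
  moreover have "j \<in> {1..card D}" using j k big by simp
  ultimately have "j \<in> (\<lambda>y. card (below y)) ` D" by simp
  then obtain y where y: "y \<in> D" "card (below y) = j" by (metis imageE)
  have yK: "y \<in> Kc" using y DK by auto
  have "card (below y) \<le> card (dec y)"
  proof (rule inj_card_le[of "\<lambda>x. card (dec x)"])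
    show "inj_on (\<lambda>x. card (dec x)) (below y)"
    proof (rule inj_onI)
      fix a b assume ab: "a \<in> below y" "b \<in> below y" "card (dec a) = card (dec b)"
      have "dec a = dec b"
        using cmp[of a b] ab card_subset_eq[of "dec a" "dec b"] card_subset_eq[of "dec b" "dec a"]
        by (auto simp: below_def)
      then show "a = b" by (rule dec_inj)
    qed
    show "(\<lambda>x. card (dec x)) ` below y \<subseteq> {1..card (dec y)}"
    proof
      fix z assume "z \<in> (\<lambda>x. card (dec x)) ` below y"
      then obtain x where x: "x \<in> below y" "z = card (dec x)" by auto
      have "x \<in> Kc" using x DK by (auto simp: below_def)
      then have "dec x \<noteq> {}" using Kc_D by auto
      then have "1 \<le> card (dec x)" by (simp add: Suc_le_eq card_gt_0_iff)
      moreover have "card (dec x) \<le> card (dec y)" using x by (intro card_mono) (auto simp: below_def)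
      ultimately show "z \<in> {1..card (dec y)}" using x by simp
    qed
  qed
  then have cj: "j \<le> card (dec y)" using y by simp
  have "card (above y) \<le> card (nb (dec y))"
  proof (rule inj_card_le[of "\<lambda>x. card (nb (dec x))"])
    show "inj_on (\<lambda>x. card (nb (dec x))) (above y)"
    proof (rule inj_onI)
      fix a b assume ab: "a \<in> above y" "b \<in> above y" "card (nb (dec a)) = card (nb (dec b))"
      have fa: "finite (nb (dec a))" "finite (nb (dec b))" using nb_sub finite_subset by blast+
      have "nb (dec a) = nb (dec b)"
        using cmp[of a b] ab nb_anti[of "dec a" "dec b"] nb_anti[of "dec b" "dec a"]
          card_subset_eq[of "nb (dec a)" "nb (dec b)"] card_subset_eq[of "nb (dec b)" "nb (dec a)"] fa
        by (auto simp: above_def)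
      then have "cl (dec a) = cl (dec b)" by (simp add: cl_def)
      moreover have "a \<in> Kc" "b \<in> Kc" using ab DK by (auto simp: above_def)
      ultimately have "dec a = dec b" using Kc_D by metis
      then show "a = b" by (rule dec_inj)
    qed
    show "(\<lambda>x. card (nb (dec x))) ` above y \<subseteq> {1..card (nb (dec y))}"
    proof
      fix z assume "z \<in> (\<lambda>x. card (nb (dec x))) ` above y"
      then obtain x where x: "x \<in> above y" "z = card (nb (dec x))" by auto
      have "x \<in> Kc" using x DK by (auto simp: above_def)
      then have "nb (dec x) \<noteq> {}" using Kc_D by auto
      moreover have "finite (nb (dec x))" using nb_sub finite_subset by blast
      ultimately have "1 \<le> card (nb (dec x))" by (simp add: Suc_le_eq card_gt_0_iff)
      moreover have "card (nb (dec x)) \<le> card (nb (dec y))"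
        using x nb_sub[of "dec y"] finite_subset[OF nb_sub[of "dec y"]]
        by (intro card_mono nb_anti) (auto simp: above_def)
      ultimately show "z \<in> {1..card (nb (dec y))}" using x by simp
    qed
  qed
  moreover have "card (below y) + card (above y) = card D + 1"
  proof -
    have "below y \<union> above y = D" using cmp y by (auto simp: below_def above_def)
    moreover have "below y \<inter> above y = {y}" using y dec_inj by (auto simp: below_def above_def)
    ultimately show ?thesis using card_Un_Int[OF finb fina, of y y] by simp
  qed
  ultimately have ck: "k \<le> card (nb (dec y))" using y big by simp
  obtain S where S: "S \<subseteq> dec y" "card S = j" using obtain_subset_with_card_n[OF cj] by metis
  obtain T where T: "T \<subseteq> nb (dec y)" "card T = k" using obtain_subset_with_card_n[OF ck] by metis
  have "bad n j k E"
    unfolding bad_def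
  proof (intro exI conjI)
    show "S \<subseteq> {..<n}" using S Kc_D[OF yK] by auto
    show "T \<subseteq> {..<n}" using T nb_sub by auto
    show "S \<inter> T = {}" using S T nb_disj[of "dec y"] by auto
    show "\<forall>s\<in>S. \<forall>t\<in>T. {s, t} \<in> E" using S T by (auto simp: nb_def)
  qed (use S T in auto)
  with nb0 show False by simp
qed

end

lemma det:
  assumes "E \<subseteq> pairs n" "\<not> bad n j k E" "0 < j" "0 < k"
  shows "\<exists>A L. simplicial_complex L \<and>
            (\<forall>\<sigma>\<in>L. int (card \<sigma>) - 1 \<le> int j + int k - 3) \<and>
            strong_deformation_retract (realization (nbhd_complex n E)) A \<and>
            subtopology (realization (nbhd_complex n E)) A homeomorphic_space realization L"
proof -
  interpret gr n E using assms(1) by unfold_locales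
  show ?thesis
  proof (intro exI conjI ballI)
    show "simplicial_complex Lc" by (rule sc_Lc)
    show "int (card \<sigma>) - 1 \<le> int j + int k - 3" if "\<sigma> \<in> Lc" for \<sigma>
      using dim[OF assms(2-4) that] by linarith
    show "strong_deformation_retract Xr Aset" by (rule sdr)
    show "subtopology Xr Aset homeomorphic_space realization Lc" by (rule homeo)
  qed
qed




lemma split_pow:
  assumes "finite Q" "x \<notin> Q"
  shows "sum g (Pow (insert x Q)) = sum g (Pow Q) + sum (\<lambda>E. g (insert x E)) (Pow Q)"
proof -
  have "Pow (insert x Q) = Pow Q \<union> insert x ` Pow Q" by (rule Pow_insert)
  moreover have "Pow Q \<inter> insert x ` Pow Q = {}" using assms(2) by auto
  moreover have "inj_on (insert x) (Pow Q)"
  proof (rule inj_onI)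
    fix A B assume AB: "A \<in> Pow Q" "B \<in> Pow Q" "insert x A = insert x B"
    then have "x \<notin> A" "x \<notin> B" using assms(2) by auto
    then show "A = B" using AB(3) by (metis Diff_insert_absorb)
  qed
  ultimately show ?thesis using assms(1)
    by (simp add: sum.union_disjoint sum.reindex)
qed

definition wt :: "'a set \<Rightarrow> real \<Rightarrow> 'a set \<Rightarrow> real" where
  "wt Q p E = p ^ card E * (1 - p) ^ (card Q - card E)"

lemma wt_ins1: "finite Q \<Longrightarrow> x \<notin> Q \<Longrightarrow> E \<subseteq> Q \<Longrightarrow> wt (insert x Q) p E = (1 - p) * wt Q p E"
proof -
  assume a: "finite Q" "x \<notin> Q" "E \<subseteq> Q"
  have "card E \<le> card Q" using a by (simp add: card_mono)
  then have "card (insert x Q) - card E = Suc (card Q - card E)" using a by simp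
  then show ?thesis by (simp add: wt_def)
qed

lemma wt_ins2: "finite Q \<Longrightarrow> x \<notin> Q \<Longrightarrow> E \<subseteq> Q \<Longrightarrow> wt (insert x Q) p (insert x E) = p * wt Q p E"
proof -
  assume a: "finite Q" "x \<notin> Q" "E \<subseteq> Q"
  have "x \<notin> E" "finite E" using a finite_subset by auto
  then have "card (insert x E) = Suc (card E)" by simp
  moreover have "card (insert x Q) = Suc (card Q)" using a by simp
  ultimately show ?thesis by (simp add: wt_def)
qed

lemma sup_prob:
  assumes "finite Q" "F \<subseteq> Q"
  shows "(\<Sum>E\<in>Pow Q. if F \<subseteq> E then wt Q p E else 0) = p ^ card F"
  using assms
proof (induction Q arbitrary: F rule: finite_induct)
  case empty
  then show ?case by (simp add: wt_def)
next
  case (insert x Q)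
  let ?g = "\<lambda>E. if F \<subseteq> E then wt (insert x Q) p E else 0"
  have spl: "sum ?g (Pow (insert x Q)) = sum ?g (Pow Q) + sum (\<lambda>E. ?g (insert x E)) (Pow Q)"
    by (rule split_pow[OF insert(1,2)])
  show ?case
  proof (cases "x \<in> F")
    case True
    define F' where "F' = F - {x}"
    have F': "F' \<subseteq> Q" "F = insert x F'" "x \<notin> F'" using insert(4) True by (auto simp: F'_def)
    have "sum ?g (Pow Q) = 0" using True insert(2) by (intro sum.neutral) auto
    moreover have "sum (\<lambda>E. ?g (insert x E)) (Pow Q) = (\<Sum>E\<in>Pow Q. p * (if F' \<subseteq> E then wt Q p E else 0))"
    proof (intro sum.cong refl)
      fix E assume "E \<in> Pow Q"
      then have "E \<subseteq> Q" by simp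
      moreover have "F \<subseteq> insert x E \<longleftrightarrow> F' \<subseteq> E" using F' insert(2) \<open>E \<subseteq> Q\<close> by auto
      ultimately show "?g (insert x E) = p * (if F' \<subseteq> E then wt Q p E else 0)"
        using wt_ins2[OF insert(1,2)] by simp
    qed
    moreover have "(\<Sum>E\<in>Pow Q. p * (if F' \<subseteq> E then wt Q p E else 0)) = p * p ^ card F'"
      by (simp add: sum_distrib_left[symmetric] insert.IH[OF F'(1)])
    moreover have "card F = Suc (card F')" using F' finite_subset[OF F'(1) insert(1)] by simp
    ultimately show ?thesis using spl by simp
  next
    case False
    have F: "F \<subseteq> Q" using insert(4) False by auto
    have "sum ?g (Pow Q) = (\<Sum>E\<in>Pow Q. (1 - p) * (if F \<subseteq> E then wt Q p E else 0))"
      using wt_ins1[OF insert(1,2)] by (intro sum.cong) auto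
    moreover have "sum (\<lambda>E. ?g (insert x E)) (Pow Q) = (\<Sum>E\<in>Pow Q. p * (if F \<subseteq> E then wt Q p E else 0))"
    proof (intro sum.cong refl)
      fix E assume "E \<in> Pow Q"
      then have "E \<subseteq> Q" by simp
      moreover have "F \<subseteq> insert x E \<longleftrightarrow> F \<subseteq> E" using False by auto
      ultimately show "?g (insert x E) = p * (if F \<subseteq> E then wt Q p E else 0)"
        using wt_ins2[OF insert(1,2)] by simp
    qed
    moreover have "(\<Sum>E\<in>Pow Q. (1 - p) * (if F \<subseteq> E then wt Q p E else 0)) = (1 - p) * p ^ card F"
      by (simp only: sum_distrib_left[symmetric] insert.IH[OF F])
    moreover have "(\<Sum>E\<in>Pow Q. p * (if F \<subseteq> E then wt Q p E else 0)) = p * p ^ card F"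
      by (simp only: sum_distrib_left[symmetric] insert.IH[OF F])
    ultimately show ?thesis using spl by (simp add: algebra_simps)
  qed
qed

lemma wt_nonneg: "0 \<le> p \<Longrightarrow> p \<le> 1 \<Longrightarrow> 0 \<le> wt Q p E"
  by (simp add: wt_def)

lemma pairs_fin: "finite (pairs n)"
  by (rule finite_subset[of _ "Pow {..<n}"]) (auto simp: pairs_def)

lemma Gnp_wt: "Gnp_prob n p P = (\<Sum>E\<in>Pow (pairs n). if P E then wt (pairs n) p E else 0)"
  unfolding Gnp_prob_def wt_def by simp

definition Fst :: "nat set \<Rightarrow> nat set \<Rightarrow> nat set set" where
  "Fst S T = (\<lambda>(s, t). {s, t}) ` (S \<times> T)"

definition Bad :: "nat \<Rightarrow> nat \<Rightarrow> nat \<Rightarrow> (nat set \<times> nat set) set" where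
  "Bad n j k = {(S, T). S \<subseteq> {..<n} \<and> T \<subseteq> {..<n} \<and> card S = j \<and> card T = k \<and> S \<inter> T = {}}"

lemma Bad_fin: "finite (Bad n j k)"
  by (rule finite_subset[of _ "Pow {..<n} \<times> Pow {..<n}"]) (auto simp: Bad_def)

lemma card_Bad: "card (Bad n j k) \<le> (n choose j) * (n choose k)"
proof -
  have "Bad n j k \<subseteq> {S. S \<subseteq> {..<n} \<and> card S = j} \<times> {T. T \<subseteq> {..<n} \<and> card T = k}"
    by (auto simp: Bad_def)
  then have "card (Bad n j k) \<le> card ({S. S \<subseteq> {..<n} \<and> card S = j} \<times> {T. T \<subseteq> {..<n} \<and> card T = k})"
    by (intro card_mono) (auto intro!: finite_cartesian_product)
  also have "\<dots> = (n choose j) * (n choose k)" by (simp add: card_cartesian_product n_subsets)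
  finally show ?thesis .
qed

lemma Fst_props:
  assumes "(S, T) \<in> Bad n j k"
  shows "Fst S T \<subseteq> pairs n" "card (Fst S T) = j * k"
proof -
  have a: "S \<subseteq> {..<n}" "T \<subseteq> {..<n}" "card S = j" "card T = k" "S \<inter> T = {}"
    using assms by (auto simp: Bad_def)
  show "Fst S T \<subseteq> pairs n"
  proof
    fix e assume "e \<in> Fst S T"
    then obtain s t where st: "s \<in> S" "t \<in> T" "e = {s, t}" by (auto simp: Fst_def)
    then have "s < n" "t < n" "s \<noteq> t" using a by auto
    then show "e \<in> pairs n" using st(3) by (auto simp: pairs_def)
  qed
  have "inj_on (\<lambda>(s, t). {s, t}) (S \<times> T)"
  proof (rule inj_onI)
    fix x y assume xy: "x \<in> S \<times> T" "y \<in> S \<times> T" "(\<lambda>(s, t). {s, t}) x = (\<lambda>(s, t). {s, t}) y"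
    obtain s t s' t' where e: "x = (s, t)" "y = (s', t')" by (cases x, cases y)
    have m: "s \<in> S" "t \<in> T" "s' \<in> S" "t' \<in> T" using xy e by auto
    have "{s, t} = {s', t'}" using xy(3) e by simp
    then have "(s = s' \<and> t = t') \<or> (s = t' \<and> t = s')" by (simp add: doubleton_eq_iff)
    moreover have "s \<noteq> t'" using m a(5) by blast
    ultimately show "x = y" using e by auto
  qed
  then have "card (Fst S T) = card (S \<times> T)" by (simp add: Fst_def card_image)
  also have "\<dots> = j * k" using a by (simp add: card_cartesian_product)
  finally show "card (Fst S T) = j * k" .
qed

lemma bad_Fst: assumes "bad n j k E" shows "\<exists>b\<in>Bad n j k. Fst (fst b) (snd b) \<subseteq> E"
proof -
  obtain S T where ST: "S \<subseteq> {..<n}" "T \<subseteq> {..<n}" "card S = j" "card T = k" "S \<inter> T = {}"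
    "\<forall>s\<in>S. \<forall>t\<in>T. {s, t} \<in> E" using assms unfolding bad_def by blast
  have "(S, T) \<in> Bad n j k" using ST by (simp add: Bad_def)
  moreover have "Fst S T \<subseteq> E" using ST(6) by (auto simp: Fst_def)
  ultimately show ?thesis by force
qed

lemma prob_bound:
  assumes p: "0 \<le> p" "p \<le> 1"
    and good: "\<And>E. E \<subseteq> pairs n \<Longrightarrow> \<not> bad n j k E \<Longrightarrow> P E"
  shows "1 - real ((n choose j) * (n choose k)) * p ^ (j * k) \<le> Gnp_prob n p P"
    and "Gnp_prob n p P \<le> 1"
proof -
  let ?Q = "pairs n"
  have tot: "(\<Sum>E\<in>Pow ?Q. wt ?Q p E) = 1" using sup_prob[OF pairs_fin, where F="{}" and p=p] by simp
  have "Gnp_prob n p P \<le> (\<Sum>E\<in>Pow ?Q. wt ?Q p E)"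
    unfolding Gnp_wt using wt_nonneg[OF p] by (intro sum_mono) auto
  then show "Gnp_prob n p P \<le> 1" using tot by simp
  have "(\<Sum>E\<in>Pow ?Q. if \<not> P E then wt ?Q p E else 0)
        \<le> (\<Sum>E\<in>Pow ?Q. \<Sum>b\<in>Bad n j k. if Fst (fst b) (snd b) \<subseteq> E then wt ?Q p E else 0)"
  proof (rule sum_mono)
    fix E assume E: "E \<in> Pow ?Q"
    show "(if \<not> P E then wt ?Q p E else 0) \<le> (\<Sum>b\<in>Bad n j k. if Fst (fst b) (snd b) \<subseteq> E then wt ?Q p E else 0)"
    proof (cases "P E")
      case True
      then show ?thesis using wt_nonneg[OF p] by (auto intro!: sum_nonneg)
    next
      case False
      then have "bad n j k E" using good E by auto
      then obtain b where b: "b \<in> Bad n j k" "Fst (fst b) (snd b) \<subseteq> E" using bad_Fst by blast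
      have "wt ?Q p E = (if Fst (fst b) (snd b) \<subseteq> E then wt ?Q p E else 0)" using b by simp
      also have "\<dots> \<le> (\<Sum>b\<in>Bad n j k. if Fst (fst b) (snd b) \<subseteq> E then wt ?Q p E else 0)"
        using b(1) Bad_fin wt_nonneg[OF p]
        by (intro member_le_sum[of b "Bad n j k" "\<lambda>b. if Fst (fst b) (snd b) \<subseteq> E then wt ?Q p E else 0"]) auto
      finally show ?thesis using False by simp
    qed
  qed
  also have "\<dots> = (\<Sum>b\<in>Bad n j k. \<Sum>E\<in>Pow ?Q. if Fst (fst b) (snd b) \<subseteq> E then wt ?Q p E else 0)"
    by (rule sum.swap)
  also have "\<dots> = (\<Sum>b\<in>Bad n j k. p ^ (j * k))"
  proof (intro sum.cong refl)
    fix b assume b: "b \<in> Bad n j k"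
    obtain S T where bST: "b = (S, T)" by (cases b)
    show "(\<Sum>E\<in>Pow ?Q. if Fst (fst b) (snd b) \<subseteq> E then wt ?Q p E else 0) = p ^ (j * k)"
      using sup_prob[OF pairs_fin, where F="Fst S T" and p=p] Fst_props[of S T n j k] b bST by simp
  qed
  also have "\<dots> = real (card (Bad n j k)) * p ^ (j * k)" by simp
  also have "\<dots> \<le> real ((n choose j) * (n choose k)) * p ^ (j * k)"
    using card_Bad[of n j k] p by (intro mult_right_mono) (simp_all add: of_nat_mult[symmetric] del: of_nat_mult)
  finally have le: "(\<Sum>E\<in>Pow ?Q. if \<not> P E then wt ?Q p E else 0) \<le> real ((n choose j) * (n choose k)) * p ^ (j * k)" .
  have "(\<Sum>E\<in>Pow ?Q. if P E then wt ?Q p E else 0) + (\<Sum>E\<in>Pow ?Q. if \<not> P E then wt ?Q p E else 0) = 1"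
  proof -
    have "(\<Sum>E\<in>Pow ?Q. if P E then wt ?Q p E else 0) + (\<Sum>E\<in>Pow ?Q. if \<not> P E then wt ?Q p E else 0)
        = (\<Sum>E\<in>Pow ?Q. (if P E then wt ?Q p E else 0) + (if \<not> P E then wt ?Q p E else 0))"
      by (rule sum.distrib[symmetric])
    also have "\<dots> = (\<Sum>E\<in>Pow ?Q. wt ?Q p E)" by (intro sum.cong) auto
    finally show ?thesis using tot by simp
  qed
  then show "1 - real ((n choose j) * (n choose k)) * p ^ (j * k) \<le> Gnp_prob n p P"
    using le unfolding Gnp_wt by linarith
qed



theorem theorem2p2:
  fixes p :: "nat \<Rightarrow> real" and j k :: "nat \<Rightarrow> nat"
  assumes "\<And>n. 0 \<le> p n \<and> p n \<le> 1"
    and "\<And>n. 0 < j n" and "\<And>n. 0 < k n"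
    and "(\<lambda>n. real (n choose j n) * real (n choose k n) * p n ^ (j n * k n)) \<longlonglongrightarrow> 0"
  shows "almost_always p (\<lambda>n E. \<exists>A L. simplicial_complex L \<and>
            (\<forall>\<sigma>\<in>L. int (card \<sigma>) - 1 \<le> int (j n) + int (k n) - 3) \<and>
            strong_deformation_retract (realization (nbhd_complex n E)) A \<and>
            subtopology (realization (nbhd_complex n E)) A homeomorphic_space realization L)"
proof -
  define Pr where "Pr = (\<lambda>n E. \<exists>A L. simplicial_complex L \<and>
            (\<forall>\<sigma>\<in>L. int (card \<sigma>) - 1 \<le> int (j n) + int (k n) - 3) \<and>
            strong_deformation_retract (realization (nbhd_complex n E)) A \<and>
            subtopology (realization (nbhd_complex n E)) A homeomorphic_space realization L)"
  define C where "C = (\<lambda>n. real (n choose j n) * real (n choose k n) * p n ^ (j n * k n))"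
  have good: "\<And>n E. E \<subseteq> pairs n \<Longrightarrow> \<not> bad n (j n) (k n) E \<Longrightarrow> Pr n E"
  proof -
    fix n E assume a: "E \<subseteq> pairs n" "\<not> bad n (j n) (k n) E"
    show "Pr n E" unfolding Pr_def by (rule det[OF a assms(2) assms(3)])
  qed
  have lo: "1 - C n \<le> Gnp_prob n (p n) (Pr n)" for n
    using prob_bound(1)[of "p n" n "j n" "k n" "Pr n"] assms(1)[of n] good by (simp add: C_def)
  have hi: "Gnp_prob n (p n) (Pr n) \<le> 1" for n
    using prob_bound(2)[of "p n" n "j n" "k n" "Pr n"] assms(1)[of n] good by simp
  have "(\<lambda>n. 1 - C n) \<longlonglongrightarrow> 1 - 0"
    using assms(4) unfolding C_def by (intro tendsto_diff tendsto_const)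
  then have lim: "(\<lambda>n. 1 - C n) \<longlonglongrightarrow> 1" by simp
  have "(\<lambda>n. Gnp_prob n (p n) (Pr n)) \<longlonglongrightarrow> 1"
  proof (rule tendsto_sandwich[of "\<lambda>n. 1 - C n" _ sequentially "\<lambda>_. 1"])
    show "\<forall>\<^sub>F n in sequentially. 1 - C n \<le> Gnp_prob n (p n) (Pr n)" using lo by simp
    show "\<forall>\<^sub>F n in sequentially. Gnp_prob n (p n) (Pr n) \<le> 1" using hi by simp
  qed (use lim in simp_all)
  then show ?thesis unfolding almost_always_def Pr_def .
qed

end
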